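(* Let $\mathcal{R}>0$, $\alpha>0$, $\beta>0$ be fixed, and let $\bar\gamma_{\mathrm{D}}>0$ with $\bar\gamma_{\mathrm{R}}=\alpha\bar\gamma_{\mathrm{D}}$ and $\bar\gamma_{\mathrm{E}}=\bar\gamma_{\mathrm{R}}/\beta$. Let $h_{\mathrm{S},\mathrm{R}},h_{\mathrm{R},\mathrm{D}},h_{\mathrm{S},\mathrm{E}}$ be independent $\mathcal{CN}(0,1)$ random variables, and define $$\mathcal{R}^{2}_{\mathrm{S}\to\mathrm{R}}=\log_2\frac{1+\bar\gamma_{\mathrm{R}}|h_{\mathrm{S},\mathrm{R}}|^2}{1+\bar\gamma_{\mathrm{E}}|h_{\mathrm{S},\mathrm{E}}|^2},\qquad \mathcal{R}^{2}_{\mathrm{R}\to\mathrm{D}}=\log_2\left(1+\bar\gamma_{\mathrm{D}}|h_{\mathrm{R},\mathrm{D}}|^2\right),$$ $\mathcal{R}_2=\max\{\min\{\mathcal{R}^{2}_{\mathrm{S}\to\mathrm{R}},\mathcal{R}^{2}_{\mathrm{R}\to\mathrm{D}}\},0\}$ and $\mathcal{P}_2=\Pr(\mathcal{R}_2<\mathcal{R})$. Then as $\bar\gamma_{\mathrm{D}}\to\infty$, $$\mathcal{P}_2\approx\mathcal{P}_2^{\lim}+\hat{\mathcal{M}}_2\bar\gamma_{\mathrm{D}}^{-1},$$ in the sense that $\mathcal{P}_2\to\mathcal{P}_2^{\lim}$ and $\bar\gamma_{\mathrm{D}}(\mathcal{P}_2-\mathcal{P}_2^{\lim})\to\hat{\mathcal{M}}_2$,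 where $$\mathcal{P}_2^{\lim}=1-\frac{1}{1+\frac{1}{\beta}2^{\mathcal{R}}},\qquad \hat{\mathcal{M}}_2=\frac{(2^{\mathcal{R}}-1)(1+1/\alpha)}{1+\frac{1}{\beta}2^{\mathcal{R}}}.$$
   Context: $\mathcal{CN}(0,1)$ denotes a circularly symmetric complex Gaussian random variable with zero mean and unit variance (Rayleigh fading). The quantities model a decode-and-forward relay system where the eavesdropper overhears only the source; $\bar\gamma$'s are average SNRs, $\mathcal{R}_2$ the secrecy capacity and $\mathcal{P}_2$ the secrecy outage probability. *)

theory Defs
  imports "HOL-Probability.Probability"
begin

definition cn01_density :: "complex \<Rightarrow> real" where
  "cn01_density z = exp (- ((cmod z)^2)) / Transcendental.pi"

definition secrecy_cap2 ::
  "real \<Rightarrow> real \<Rightarrow> real \<Rightarrow> complex \<Rightarrow> complex \<Rightarrow> complex \<Rightarrow> real" where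
  "secrecy_cap2 \<alpha> \<beta> \<gamma>D hSR hRD hSE =
     (let \<gamma>R = \<alpha> * \<gamma>D; \<gamma>E = \<gamma>R / \<beta>;
          RSR = log 2 ((1 + \<gamma>R * (cmod hSR)^2) / (1 + \<gamma>E * (cmod hSE)^2));
          RRD = log 2 (1 + \<gamma>D * (cmod hRD)^2)
      in max (min RSR RRD) 0)"

definition outage_prob2 ::
  "'a measure \<Rightarrow> real \<Rightarrow> real \<Rightarrow> real \<Rightarrow> ('a \<Rightarrow> complex) \<Rightarrow> ('a \<Rightarrow> complex)
     \<Rightarrow> ('a \<Rightarrow> complex) \<Rightarrow> real \<Rightarrow> real" where
  "outage_prob2 M \<alpha> \<beta> R hSR hRD hSE \<gamma>D =
     measure M {\<omega> \<in> space M. secrecy_cap2 \<alpha> \<beta> \<gamma>D (hSR \<omega>) (hRD \<omega>) (hSE \<omega>) < R}"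

end

theory Submission
  imports Defs "HOL-Real_Asymp.Real_Asymp"
begin

lemma exp_tail:
  "(\<integral>\<^sup>+u. ennreal (exp (-u)) * indicator {c..} u \<partial>lborel) = ennreal (exp (-c))"
proof -
  have "(\<integral>\<^sup>+u. ennreal (exp (-u)) * indicator {c..} u \<partial>lborel) = ennreal (0 - (- exp (-c)))"
    by (rule nn_integral_FTC_atLeast[where F="\<lambda>u. - exp (-u)"])
       (auto intro!: derivative_eq_intros, real_asymp)
  then show ?thesis by simp
qed

lemma exp_lin_tail:
  "(\<integral>\<^sup>+u. ennreal (exp (-u) * (u - a)) * indicator {a..} u \<partial>lborel) = ennreal (exp (-a))"
proof -
  have "(\<integral>\<^sup>+u. ennreal (exp (-u) * (u - a)) * indicator {a..} u \<partial>lborel)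
       = ennreal (0 - (- (a - a + 1) * exp (-a)))"
    by (rule nn_integral_FTC_atLeast[where F="\<lambda>u. - (u - a + 1) * exp (-u)"])
       (auto intro!: derivative_eq_intros simp: algebra_simps, real_asymp)
  then show ?thesis by simp
qed

lemma cball_complex: "r \<ge> 0 \<Longrightarrow> emeasure lborel (cball (0::complex) r) = ennreal (pi * r^2)"
  by (simp add: emeasure_cball unit_ball_vol_2)

lemma annulus_measure:
  assumes a: "a \<ge> 0"
  shows "emeasure lborel {z::complex. a < (cmod z)^2 \<and> (cmod z)^2 \<le> u}
         = ennreal (pi * (u - a)) * indicator {a..} u"
proof (cases "a \<le> u")
  case True
  have eq: "{z::complex. a < (cmod z)^2 \<and> (cmod z)^2 \<le> u} = cball 0 (sqrt u) - cball 0 (sqrt a)"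
  proof -
    { fix z :: complex
      have "(cmod z)^2 \<le> u \<longleftrightarrow> cmod z \<le> sqrt u"
        by (subst real_sqrt_le_iff[symmetric]) simp
      moreover have "a < (cmod z)^2 \<longleftrightarrow> sqrt a < cmod z"
        by (subst real_sqrt_less_iff[symmetric]) simp
      ultimately have "(a < (cmod z)^2 \<and> (cmod z)^2 \<le> u) \<longleftrightarrow> z \<in> cball 0 (sqrt u) - cball 0 (sqrt a)"
        by (auto simp add: not_le) }
    then show ?thesis by blast
  qed
  have sub: "cball (0::complex) (sqrt a) \<subseteq> cball 0 (sqrt u)"
    using True by (auto simp: subset_iff intro: order_trans[OF _ real_sqrt_le_mono])
  have "emeasure lborel (cball (0::complex) (sqrt u) - cball 0 (sqrt a))
      = emeasure lborel (cball (0::complex) (sqrt u)) - emeasure lborel (cball (0::complex) (sqrt a))"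
    using sub a True by (subst emeasure_Diff) (auto simp: cball_complex)
  also have "\<dots> = ennreal (pi * u) - ennreal (pi * a)"
    using True a by (simp add: cball_complex)
  also have "\<dots> = ennreal (pi * (u - a))"
    using True a by (simp add: ennreal_minus algebra_simps)
  finally show ?thesis using True eq by simp
next
  case False
  have e0: "{z::complex. a < (cmod z)^2 \<and> (cmod z)^2 \<le> u} = {}" using False by auto
  show ?thesis using False by (subst e0) simp
qed

lemma gauss_tail:
  assumes a: "a \<ge> 0"
  shows "(\<integral>\<^sup>+z. ennreal (cn01_density z) * indicator {z. a < (cmod z)^2} z \<partial>lborel) = ennreal (exp (-a))"
proof -
  define f where "f = (\<lambda>p::complex \<times> real. ennreal ((1/pi) * exp (- snd p) *
      (if (cmod (fst p))^2 \<le> snd p \<and> a < (cmod (fst p))^2 then 1 else 0)))"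
  have fm: "f \<in> borel_measurable (lborel \<Otimes>\<^sub>M lborel)"
    unfolding f_def by measurable
  have "(\<integral>\<^sup>+z. ennreal (cn01_density z) * indicator {z. a < (cmod z)^2} z \<partial>lborel)
      = (\<integral>\<^sup>+z. (\<integral>\<^sup>+u. f (z, u) \<partial>lborel) \<partial>lborel)"
  proof (rule nn_integral_cong)
    fix z :: complex
    have "(\<integral>\<^sup>+u. f (z, u) \<partial>lborel) = (\<integral>\<^sup>+u. (ennreal (1/pi) * indicator {z. a < (cmod z)^2} z) *
         (ennreal (exp (-u)) * indicator {(cmod z)^2..} u) \<partial>lborel)"
      unfolding f_def by (intro nn_integral_cong) (auto simp: ennreal_mult'[symmetric] split: split_indicator)
    also have "\<dots> = ennreal (1/pi) * indicator {z. a < (cmod z)^2} z *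
         (\<integral>\<^sup>+u. ennreal (exp (-u)) * indicator {(cmod z)^2..} u \<partial>lborel)"
      by (rule nn_integral_cmult) auto
    also have "\<dots> = ennreal (cn01_density z) * indicator {z. a < (cmod z)^2} z"
      by (simp add: exp_tail cn01_density_def divide_inverse ennreal_mult mult.assoc, simp add: ac_simps)
    finally show "ennreal (cn01_density z) * indicator {z. a < (cmod z)^2} z = (\<integral>\<^sup>+u. f (z, u) \<partial>lborel)"
      by simp
  qed
  also have "\<dots> = (\<integral>\<^sup>+u. (\<integral>\<^sup>+z. f (z, u) \<partial>lborel) \<partial>lborel)"
    using lborel_pair.Fubini[OF fm] by simp
  also have "\<dots> = (\<integral>\<^sup>+u. ennreal (exp (-u) * (u - a)) * indicator {a..} u \<partial>lborel)"
  proof (rule nn_integral_cong)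
    fix u :: real
    have "(\<integral>\<^sup>+z. f (z, u) \<partial>lborel) = (\<integral>\<^sup>+z. ennreal (1/pi) * ennreal (exp (-u)) *
          indicator {z::complex. a < (cmod z)^2 \<and> (cmod z)^2 \<le> u} z \<partial>lborel)"
      unfolding f_def by (intro nn_integral_cong) (auto simp: ennreal_mult'[symmetric] split: split_indicator)
    also have "\<dots> = ennreal (1/pi) * ennreal (exp (-u)) *
          emeasure lborel {z::complex. a < (cmod z)^2 \<and> (cmod z)^2 \<le> u}"
      by (subst nn_integral_cmult) auto
    also have "\<dots> = ennreal (exp (-u) * (u - a)) * indicator {a..} u"
      using a by (auto simp: annulus_measure ennreal_mult'[symmetric] split: split_indicator)
    finally show "(\<integral>\<^sup>+z. f (z, u) \<partial>lborel) = ennreal (exp (-u) * (u - a)) * indicator {a..} u" .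
  qed
  also have "\<dots> = ennreal (exp (-a))" by (rule exp_lin_tail)
  finally show ?thesis .
qed

lemma indep_var_of_vars:
  assumes P: "prob_space M" and ind: "prob_space.indep_vars M M' X I"
    and ij: "i \<in> I" "j \<in> I" "i \<noteq> j"
  shows "prob_space.indep_var M (M' i) (X i) (M' j) (X j)"
proof -
  interpret prob_space M by fact
  have rv: "random_variable (M' i) (X i)" "random_variable (M' j) (X j)"
    using ind ij by (auto simp: indep_vars_def)
  have isx: "indep_sets (\<lambda>k. sigma_sets (space M) {X k -` A \<inter> space M | A. A \<in> sets (M' k)}) I"
    using ind by (auto simp: indep_vars_def)
  have ev: "\<And>k. k \<in> I \<Longrightarrow> sigma_sets (space M) {X k -` A \<inter> space M | A. A \<in> sets (M' k)} \<subseteq> events"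
    using isx by (auto simp: indep_sets_def)
  show ?thesis
    unfolding indep_var_eq
  proof (intro conjI rv indep_setI)
    show "sigma_sets (space M) {X i -` A \<inter> space M |A. A \<in> sets (M' i)} \<subseteq> events"
      using ev ij by auto
    show "sigma_sets (space M) {X j -` A \<inter> space M |A. A \<in> sets (M' j)} \<subseteq> events"
      using ev ij by auto
    fix a b
    assume a: "a \<in> sigma_sets (space M) {X i -` A \<inter> space M |A. A \<in> sets (M' i)}"
      and b: "b \<in> sigma_sets (space M) {X j -` A \<inter> space M |A. A \<in> sets (M' j)}"
    define F where "F = (\<lambda>k. if k = i then a else b)"
    have "prob (\<Inter>k\<in>{i,j}. F k) = (\<Prod>k\<in>{i,j}. prob (F k))"
      by (rule indep_setsD[OF isx]) (use ij a b in \<open>auto simp: F_def\<close>)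
    then show "prob (a \<inter> b) = prob a * prob b"
      using ij by (simp add: F_def Int_commute)
  qed
qed

lemma cmod_sq_exponential:
  assumes P: "prob_space M" and D: "distributed M lborel h (\<lambda>z. ennreal (cn01_density z))"
  shows "distributed M lborel (\<lambda>\<omega>. (cmod (h \<omega>))^2) (exponential_density 1)"
proof -
  interpret prob_space M by fact
  have hm[measurable]: "h \<in> borel_measurable M"
    using distributed_measurable[OF D] by simp
  have key: "emeasure M {\<omega>\<in>space M. (cmod (h \<omega>))^2 \<le> a} = 1 - ennreal (exp (- a * 1))" if a: "0 \<le> a" for a
  proof -
    have S: "{z::complex. a < (cmod z)^2} \<in> sets lborel" by simp
    have "emeasure M (h -` {z. a < (cmod z)^2} \<inter> space M) = ennreal (exp (-a))"
      using distributed_emeasure[OF D S] gauss_tail[OF a] by simp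
    moreover have "h -` {z. a < (cmod z)^2} \<inter> space M = {\<omega>\<in>space M. a < (cmod (h \<omega>))^2}" by auto
    ultimately have p: "prob {\<omega>\<in>space M. a < (cmod (h \<omega>))^2} = exp (-a)"
      by (simp add: emeasure_eq_measure)
    have ev: "{\<omega>\<in>space M. a < (cmod (h \<omega>))^2} \<in> events" by measurable
    have "{\<omega>\<in>space M. (cmod (h \<omega>))^2 \<le> a} = space M - {\<omega>\<in>space M. a < (cmod (h \<omega>))^2}"
      by auto
    then have "prob {\<omega>\<in>space M. (cmod (h \<omega>))^2 \<le> a} = 1 - exp (-a)"
      using prob_compl[OF ev] p by simp
    moreover have "ennreal (1 - exp (-a)) = 1 - ennreal (exp (-a))"
      by (subst ennreal_minus[symmetric]) auto
    ultimately show ?thesis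
      by (simp add: emeasure_eq_measure)
  qed
  show ?thesis
    by (rule exponential_distributedI) (use key in auto)
qed

lemma expd_tail:
  assumes c: "c \<ge> 0"
  shows "(\<integral>\<^sup>+x. ennreal (exponential_density 1 x) * indicator {c..} x \<partial>lborel) = ennreal (exp (-c))"
proof -
  have "(\<integral>\<^sup>+x. ennreal (exponential_density 1 x) * indicator {c..} x \<partial>lborel)
       = (\<integral>\<^sup>+x. ennreal (exp (-x)) * indicator {c..} x \<partial>lborel)"
    using c by (intro nn_integral_cong) (auto simp: exponential_density_def split: split_indicator)
  then show ?thesis by (simp add: exp_tail)
qed

lemma exp_lin_integral:
  assumes k: "k \<ge> 0"
  shows "(\<integral>\<^sup>+z. ennreal (exp (-s) * exp (- (1+k) * z)) * indicator {0..} z \<partial>lborel)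
         = ennreal (exp (-s) / (1+k))"
proof -
  have "(\<integral>\<^sup>+z. ennreal (exp (-s) * exp (- (1+k) * z)) * indicator {0..} z \<partial>lborel)
      = ennreal (0 - (- exp (-s) * exp (- (1+k) * 0) / (1+k)))"
  proof (rule nn_integral_FTC_atLeast[where F="\<lambda>z. - exp (-s) * exp (-(1+k)*z)/(1+k)"])
    show "(\<lambda>x. exp (- s) * exp (- (1 + k) * x)) \<in> borel_measurable borel" by measurable
    fix z :: real
    show "((\<lambda>z. - exp (- s) * exp (- (1 + k) * z) / (1 + k)) has_real_derivative
          exp (- s) * exp (- (1 + k) * z)) (at z)"
    proof -
      have kk: "1 + k \<noteq> 0" using k by simp
      have kk2: "1 + (k * k + k * 2) \<noteq> 0"
      proof -
        have "0 < 1 + (k * k + k * 2)" using k by (intro add_pos_nonneg) auto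
        then show ?thesis by simp
      qed
      show ?thesis
        by (rule derivative_eq_intros refl)+ (use kk kk2 in \<open>simp_all add: divide_simps algebra_simps\<close>)
    qed
    show "0 \<le> exp (- s) * exp (- (1 + k) * z)" by simp
  next
    show "((\<lambda>z. - exp (- s) * exp (- (1 + k) * z) / (1 + k)) \<longlongrightarrow> 0) at_top"
      using k by real_asymp
  qed
  then show ?thesis by simp
qed

lemma joint_prob:
  fixes W :: "nat \<Rightarrow> 'a \<Rightarrow> real"
  assumes P: "prob_space M"
    and ind: "prob_space.indep_vars M (\<lambda>_. lborel) W {0,1,2}"
    and D0: "distributed M lborel (W 0) (exponential_density 1)"
    and D1: "distributed M lborel (W 1) (exponential_density 1)"
    and D2: "distributed M lborel (W 2) (exponential_density 1)"
    and s: "s \<ge> 0" and t: "t \<ge> 0" and k: "k \<ge> 0"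
  shows "measure M {\<omega>\<in>space M. s + k * W 2 \<omega> \<le> W 0 \<omega> \<and> t \<le> W 1 \<omega>} = exp (-s) / (1+k) * exp (-t)"
proof -
  interpret prob_space M by fact
  have W0m[measurable]: "W 0 \<in> borel_measurable M" using distributed_measurable[OF D0] by simp
  have W1m[measurable]: "W 1 \<in> borel_measurable M" using distributed_measurable[OF D1] by simp
  have W2m[measurable]: "W 2 \<in> borel_measurable M" using distributed_measurable[OF D2] by simp
  have edm[measurable]: "(\<lambda>x. ennreal (exponential_density 1 x)) \<in> borel_measurable borel"
    using distributed_borel_measurable[OF D0] by simp
  have pa: "prob {\<omega>\<in>space M. t \<le> W 1 \<omega>} = exp (-t)"
  proof -
    have "emeasure M (W 1 -` {t..} \<inter> space M) = ennreal (exp (-t))"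
      using distributed_emeasure[OF D1, of "{t..}"] expd_tail[OF t] by simp
    moreover have "W 1 -` {t..} \<inter> space M = {\<omega>\<in>space M. t \<le> W 1 \<omega>}" by auto
    ultimately show ?thesis by (simp add: emeasure_eq_measure)
  qed
  have pb: "prob {\<omega>\<in>space M. s + k * W 2 \<omega> \<le> W 0 \<omega>} = exp (-s) / (1+k)"
  proof -
    have iv: "indep_var lborel (W 0) lborel (W 2)"
      using indep_var_of_vars[OF P ind, of 0 2] by simp
    have J: "distributed M (lborel \<Otimes>\<^sub>M lborel) (\<lambda>x. (W 0 x, W 2 x))
        (\<lambda>(x, y). ennreal (exponential_density 1 x) * ennreal (exponential_density 1 y))"
      by (rule distributed_joint_indep[OF _ _ D0 D2 iv]) (auto intro: lborel.sigma_finite_measure_axioms)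
    define A where "A = {p::real\<times>real. s + k * snd p \<le> fst p}"
    have "Measurable.pred (lborel \<Otimes>\<^sub>M lborel) (\<lambda>p::real\<times>real. s + k * snd p \<le> fst p)"
      by measurable
    then have A: "A \<in> sets (lborel \<Otimes>\<^sub>M lborel)"
      unfolding A_def pred_def by (simp add: space_pair_measure)
    have "emeasure M ((\<lambda>x. (W 0 x, W 2 x)) -` A \<inter> space M)
       = (\<integral>\<^sup>+p. (case p of (x, y) \<Rightarrow> ennreal (exponential_density 1 x) * ennreal (exponential_density 1 y))
            * indicator A p \<partial>(lborel \<Otimes>\<^sub>M lborel))"
      by (rule distributed_emeasure[OF J A])
    also have "\<dots> = (\<integral>\<^sup>+y. (\<integral>\<^sup>+x. ennreal (exponential_density 1 x) * ennreal (exponential_density 1 y)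
            * indicator A (x, y) \<partial>lborel) \<partial>lborel)"
      by (subst lborel_pair.nn_integral_snd[symmetric]) (use A in \<open>auto simp: case_prod_beta\<close>)
    also have "\<dots> = (\<integral>\<^sup>+y. ennreal (exp (-s) * exp (- (1+k) * y)) * indicator {0..} y \<partial>lborel)"
    proof (rule nn_integral_cong)
      fix y :: real
      show "(\<integral>\<^sup>+x. ennreal (exponential_density 1 x) * ennreal (exponential_density 1 y)
            * indicator A (x, y) \<partial>lborel) = ennreal (exp (-s) * exp (- (1+k) * y)) * indicator {0..} y"
      proof (cases "y \<ge> 0")
        case True
        have "(\<integral>\<^sup>+x. ennreal (exponential_density 1 x) * ennreal (exponential_density 1 y)
            * indicator A (x, y) \<partial>lborel)
            = (\<integral>\<^sup>+x. ennreal (exponential_density 1 y) *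
                 (ennreal (exponential_density 1 x) * indicator {s + k * y..} x) \<partial>lborel)"
          by (intro nn_integral_cong) (auto simp: A_def mult.commute split: split_indicator)
        also have "\<dots> = ennreal (exponential_density 1 y) *
              (\<integral>\<^sup>+x. ennreal (exponential_density 1 x) * indicator {s + k * y..} x \<partial>lborel)"
          by (rule nn_integral_cmult) simp
        also have "\<dots> = ennreal (exp (-y)) * ennreal (exp (- (s + k * y)))"
          using True s k by (subst expd_tail) (auto simp: exponential_density_def)
        also have "\<dots> = ennreal (exp (-s) * exp (- (1+k) * y)) * indicator {0..} y"
          using True by (simp add: ennreal_mult'[symmetric] exp_add[symmetric] algebra_simps)
        finally show ?thesis .
      next
        case False
        then show ?thesis by (simp add: exponential_density_def)
      qed
    qed
    also have "\<dots> = ennreal (exp (-s) / (1+k))"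
      by (rule exp_lin_integral[OF k])
    finally have "emeasure M ((\<lambda>x. (W 0 x, W 2 x)) -` A \<inter> space M) = ennreal (exp (-s) / (1+k))" .
    moreover have "(\<lambda>x. (W 0 x, W 2 x)) -` A \<inter> space M = {\<omega>\<in>space M. s + k * W 2 \<omega> \<le> W 0 \<omega>}"
      by (auto simp: A_def)
    ultimately show ?thesis using k by (simp add: emeasure_eq_measure)
  qed
  define K where "K = (\<lambda>j::nat. if j = 0 then {0, 2::nat} else {1})"
  have ir: "indep_vars (\<lambda>j. PiM (K j) (\<lambda>_. lborel)) (\<lambda>j \<omega>. restrict (\<lambda>i. W i \<omega>) (K j)) {0,1}"
    by (rule indep_vars_restrict[OF ind]) (auto simp: K_def disjoint_family_on_def)
  have iv2: "indep_var (PiM {0,2} (\<lambda>_. lborel)) (\<lambda>\<omega>. restrict (\<lambda>i. W i \<omega>) {0,2})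
                       (PiM {1} (\<lambda>_. lborel)) (\<lambda>\<omega>. restrict (\<lambda>i. W i \<omega>) {1})"
    using indep_var_of_vars[OF P ir, of 0 1] by (simp add: K_def)
  define Xa where "Xa = {f \<in> space (PiM {0,2::nat} (\<lambda>_. lborel)). s + k * f 2 \<le> (f 0 :: real)}"
  define Xb where "Xb = {f \<in> space (PiM {1::nat} (\<lambda>_. lborel)). t \<le> (f 1 :: real)}"
  have c0: "(\<lambda>f::nat\<Rightarrow>real. f 0) \<in> measurable (PiM {0,2} (\<lambda>_. lborel)) lborel"
    by (rule measurable_component_singleton) simp
  have c2: "(\<lambda>f::nat\<Rightarrow>real. f 2) \<in> measurable (PiM {0,2} (\<lambda>_. lborel)) lborel"
    by (rule measurable_component_singleton) simp
  have c1: "(\<lambda>f::nat\<Rightarrow>real. f 1) \<in> measurable (PiM {1} (\<lambda>_. lborel)) lborel"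
    by (rule measurable_component_singleton) simp
  have b0: "(\<lambda>f::nat\<Rightarrow>real. f 0) \<in> borel_measurable (PiM {0,2} (\<lambda>_. lborel))"
    and b2: "(\<lambda>f::nat\<Rightarrow>real. f 2) \<in> borel_measurable (PiM {0,2} (\<lambda>_. lborel))"
    and b1: "(\<lambda>f::nat\<Rightarrow>real. f 1) \<in> borel_measurable (PiM {1} (\<lambda>_. lborel))"
    using c0 c1 c2 by simp_all
  have Xa: "Xa \<in> sets (PiM {0,2::nat} (\<lambda>_. lborel))"
    unfolding Xa_def by (rule borel_measurable_le) (use b0 b2 in \<open>auto intro!: borel_measurable_add borel_measurable_times\<close>)
  have Xb: "Xb \<in> sets (PiM {1::nat} (\<lambda>_. lborel))"
    unfolding Xb_def by (rule borel_measurable_le) (use b1 in \<open>auto\<close>)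
  have eq: "prob ((\<lambda>x. (restrict (\<lambda>i. W i x) {0,2}, restrict (\<lambda>i. W i x) {1})) -` (Xa \<times> Xb) \<inter> space M) =
      prob ((\<lambda>\<omega>. restrict (\<lambda>i. W i \<omega>) {0,2}) -` Xa \<inter> space M) *
      prob ((\<lambda>\<omega>. restrict (\<lambda>i. W i \<omega>) {1}) -` Xb \<inter> space M)"
    by (rule indep_varD[OF iv2 Xa Xb])
  have e1: "(\<lambda>x. (restrict (\<lambda>i. W i x) {0,2}, restrict (\<lambda>i. W i x) {1})) -` (Xa \<times> Xb) \<inter> space M
      = {\<omega>\<in>space M. s + k * W 2 \<omega> \<le> W 0 \<omega> \<and> t \<le> W 1 \<omega>}"
    by (auto simp: Xa_def Xb_def space_PiM)
  have e2: "(\<lambda>\<omega>. restrict (\<lambda>i. W i \<omega>) {0,2}) -` Xa \<inter> space M = {\<omega>\<in>space M. s + k * W 2 \<omega> \<le> W 0 \<omega>}"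
    by (auto simp: Xa_def space_PiM)
  have e3: "(\<lambda>\<omega>. restrict (\<lambda>i. W i \<omega>) {1}) -` Xb \<inter> space M = {\<omega>\<in>space M. t \<le> W 1 \<omega>}"
    by (auto simp: Xb_def space_PiM)
  show ?thesis using eq pa pb unfolding e1 e2 e3 by simp
qed

lemma cap_iff:
  fixes R \<alpha> \<beta> g :: real and a b e :: complex
  assumes R: "R > 0" and al: "\<alpha> > 0" and be: "\<beta> > 0" and g: "g > 0"
  shows "secrecy_cap2 \<alpha> \<beta> g a b e < R \<longleftrightarrow>
     \<not> ((2 powr R - 1) / (\<alpha> * g) + ((1/\<beta>) * 2 powr R) * (cmod e)^2 \<le> (cmod a)^2
        \<and> (2 powr R - 1) / g \<le> (cmod b)^2)"
proof -
  define x where "x = (cmod a)^2"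
  define y where "y = (cmod b)^2"
  define z where "z = (cmod e)^2"
  define P where "P = 2 powr R"
  have x: "x \<ge> 0" and y: "y \<ge> 0" and z: "z \<ge> 0" by (simp_all add: x_def y_def z_def)
  have ag: "\<alpha> * g > 0" using al g by simp
  have p1: "0 < (1 + \<alpha> * g * x) / (1 + \<alpha> * g / \<beta> * z)"
    using ag be x z by (intro divide_pos_pos add_pos_nonneg) auto
  have p2: "0 < 1 + g * y" using g y by (intro add_pos_nonneg) auto
  have q: "0 < 1 + \<alpha> * g / \<beta> * z" using ag be z by (intro add_pos_nonneg) auto
  have i1: "R \<le> log 2 ((1 + \<alpha> * g * x) / (1 + \<alpha> * g / \<beta> * z)) \<longleftrightarrow>
      (P - 1) / (\<alpha> * g) + ((1/\<beta>) * P) * z \<le> x"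
  proof -
    have "R \<le> log 2 ((1 + \<alpha> * g * x) / (1 + \<alpha> * g / \<beta> * z)) \<longleftrightarrow>
        P \<le> (1 + \<alpha> * g * x) / (1 + \<alpha> * g / \<beta> * z)"
      unfolding P_def by (rule le_log_iff) (use p1 in auto)
    also have "\<dots> \<longleftrightarrow> P * (1 + \<alpha> * g / \<beta> * z) \<le> 1 + \<alpha> * g * x"
      using q by (simp add: pos_le_divide_eq)
    also have "\<dots> \<longleftrightarrow> (P - 1) + ((1/\<beta>) * P) * z * (\<alpha> * g) \<le> x * (\<alpha> * g)"
      by (simp add: algebra_simps)
    also have "\<dots> \<longleftrightarrow> ((P - 1) / (\<alpha> * g) + ((1/\<beta>) * P) * z) * (\<alpha> * g) \<le> x * (\<alpha> * g)"
    proof -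
      have "((P - 1) / (\<alpha> * g) + ((1/\<beta>) * P) * z) * (\<alpha> * g) = (P - 1) + ((1/\<beta>) * P) * z * (\<alpha> * g)"
        using al g by (simp add: distrib_right)
      then show ?thesis by simp
    qed
    also have "\<dots> \<longleftrightarrow> (P - 1) / (\<alpha> * g) + ((1/\<beta>) * P) * z \<le> x"
      using ag by (rule mult_le_cancel_right_pos)
    finally show ?thesis .
  qed
  have i2: "R \<le> log 2 (1 + g * y) \<longleftrightarrow> (P - 1) / g \<le> y"
  proof -
    have "R \<le> log 2 (1 + g * y) \<longleftrightarrow> P \<le> 1 + g * y"
      unfolding P_def by (rule le_log_iff) (use p2 in auto)
    also have "\<dots> \<longleftrightarrow> (P - 1) / g \<le> y"
      using g by (simp add: pos_divide_le_eq algebra_simps)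
    finally show ?thesis .
  qed
  have "secrecy_cap2 \<alpha> \<beta> g a b e < R \<longleftrightarrow>
      \<not> (R \<le> log 2 ((1 + \<alpha> * g * x) / (1 + \<alpha> * g / \<beta> * z)) \<and> R \<le> log 2 (1 + g * y))"
    unfolding secrecy_cap2_def Let_def x_def y_def z_def using R by auto
  then show ?thesis using i1 i2 unfolding x_def y_def z_def P_def by simp
qed

lemma lim1: "((\<lambda>g::real. exp (- (d/g))) \<longlongrightarrow> 1) at_top"
  by real_asymp

lemma lim2: "d > 0 \<Longrightarrow> ((\<lambda>g::real. g * (1 - exp (- (d/g)))) \<longlongrightarrow> d) at_top"
  by real_asymp

theorem theorem6:
  fixes M :: "'a measure" and hSR hRD hSE :: "'a \<Rightarrow> complex"
    and R \<alpha> \<beta> :: real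
  assumes "prob_space M"
    and "R > 0" and "\<alpha> > 0" and "\<beta> > 0"
    and "distributed M lborel hSR (\<lambda>z. ennreal (cn01_density z))"
    and "distributed M lborel hRD (\<lambda>z. ennreal (cn01_density z))"
    and "distributed M lborel hSE (\<lambda>z. ennreal (cn01_density z))"
    and "prob_space.indep_vars M (\<lambda>_. borel)
           (\<lambda>i::nat. if i = 0 then hSR else if i = 1 then hRD else hSE) {0, 1, 2}"
  shows "(outage_prob2 M \<alpha> \<beta> R hSR hRD hSE \<longlongrightarrow> 1 - 1 / (1 + (1/\<beta>) * 2 powr R)) at_top
       \<and> ((\<lambda>\<gamma>D. \<gamma>D * (outage_prob2 M \<alpha> \<beta> R hSR hRD hSE \<gamma>D - (1 - 1 / (1 + (1/\<beta>) * 2 powr R))))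
            \<longlongrightarrow> (2 powr R - 1) * (1 + 1/\<alpha>) / (1 + (1/\<beta>) * 2 powr R)) at_top"
proof -
  note P = assms(1) and R = assms(2) and al = assms(3) and be = assms(4)
    and DSR = assms(5) and DRD = assms(6) and DSE = assms(7) and ind = assms(8)
  interpret prob_space M by fact
  define hf where "hf = (\<lambda>i::nat. if i = 0 then hSR else if i = 1 then hRD else hSE)"
  define W where "W = (\<lambda>i \<omega>. (cmod (hf i \<omega>))^2)"
  have ind': "indep_vars (\<lambda>_. lborel) W {0,1,2}"
    unfolding W_def
    by (rule indep_vars_compose2[OF ind[folded hf_def], where Y="\<lambda>i z. (cmod z)^2"]) simp
  have W0: "W 0 = (\<lambda>\<omega>. (cmod (hSR \<omega>))^2)" and W1: "W 1 = (\<lambda>\<omega>. (cmod (hRD \<omega>))^2)"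
    and W2: "W 2 = (\<lambda>\<omega>. (cmod (hSE \<omega>))^2)"
    by (simp_all add: W_def hf_def)
  have D0: "distributed M lborel (W 0) (exponential_density 1)"
    unfolding W0 by (rule cmod_sq_exponential[OF P DSR])
  have D1: "distributed M lborel (W 1) (exponential_density 1)"
    unfolding W1 by (rule cmod_sq_exponential[OF P DRD])
  have D2: "distributed M lborel (W 2) (exponential_density 1)"
    unfolding W2 by (rule cmod_sq_exponential[OF P DSE])
  have W0m[measurable]: "W 0 \<in> borel_measurable M" using distributed_measurable[OF D0] by simp
  have W1m[measurable]: "W 1 \<in> borel_measurable M" using distributed_measurable[OF D1] by simp
  have W2m[measurable]: "W 2 \<in> borel_measurable M" using distributed_measurable[OF D2] by simp
  define c where "c = 2 powr R - 1"
  define k where "k = (1/\<beta>) * 2 powr R"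
  define d where "d = c / \<alpha> + c"
  have c: "c > 0" unfolding c_def using R by simp
  have k: "k \<ge> 0" unfolding k_def using be by simp
  have d: "d > 0" unfolding d_def using c al by (intro add_pos_pos divide_pos_pos)
  have outage: "outage_prob2 M \<alpha> \<beta> R hSR hRD hSE g = 1 - exp (- (d / g)) / (1 + k)" if g: "g > 0" for g
  proof -
    define E where "E = {\<omega>\<in>space M. c / (\<alpha> * g) + k * W 2 \<omega> \<le> W 0 \<omega> \<and> c / g \<le> W 1 \<omega>}"
    have Ee: "E \<in> events" unfolding E_def by measurable
    have "{\<omega>\<in>space M. secrecy_cap2 \<alpha> \<beta> g (hSR \<omega>) (hRD \<omega>) (hSE \<omega>) < R} = space M - E"
      unfolding E_def using cap_iff[OF R al be g] by (auto simp: W_def hf_def c_def k_def)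
    then have "outage_prob2 M \<alpha> \<beta> R hSR hRD hSE g = 1 - prob E"
      unfolding outage_prob2_def using prob_compl[OF Ee] by simp
    also have "prob E = exp (- (c / (\<alpha> * g))) / (1 + k) * exp (- (c / g))"
      unfolding E_def
      by (rule joint_prob[OF P ind' D0 D1 D2]) (use c al g k in auto)
    also have "exp (- (c / (\<alpha> * g))) / (1 + k) * exp (- (c / g)) = exp (- (d / g)) / (1 + k)"
      using g al by (simp add: d_def exp_add[symmetric] field_simps)
    finally show ?thesis .
  qed
  have ev: "eventually (\<lambda>g. outage_prob2 M \<alpha> \<beta> R hSR hRD hSE g = 1 - exp (- (d / g)) / (1 + k)) at_top"
    using outage by (intro eventually_at_top_linorderI[of 1]) auto
  have L1: "((\<lambda>g. 1 - exp (- (d / g)) / (1 + k)) \<longlongrightarrow> 1 - 1 / (1 + k)) at_top"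
    by (intro tendsto_intros lim1) (use k in simp)
  have L2: "((\<lambda>g. g * (1 - exp (- (d / g))) / (1 + k)) \<longlongrightarrow> d / (1 + k)) at_top"
    by (intro tendsto_intros lim2[OF d]) (use k in simp)
  have ev2: "eventually (\<lambda>g. g * (outage_prob2 M \<alpha> \<beta> R hSR hRD hSE g - (1 - 1 / (1 + k)))
        = g * (1 - exp (- (d / g))) / (1 + k)) at_top"
    using ev
  proof eventually_elim
    case (elim g)
    have h: "(1 - exp (- (d / g)) / (1 + k)) - (1 - 1 / (1 + k)) = (1 - exp (- (d / g))) / (1 + k)"
      by (simp add: diff_divide_distrib)
    show ?case by (subst elim, subst h, simp)
  qed
  have dd: "d = (2 powr R - 1) * (1 + 1/\<alpha>)" using al unfolding d_def c_def by (simp add: field_simps)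
  show ?thesis
  proof
    show "(outage_prob2 M \<alpha> \<beta> R hSR hRD hSE \<longlongrightarrow> 1 - 1 / (1 + (1/\<beta>) * 2 powr R)) at_top"
      using tendsto_cong[OF ev] L1 unfolding k_def by simp
    show "((\<lambda>\<gamma>D. \<gamma>D * (outage_prob2 M \<alpha> \<beta> R hSR hRD hSE \<gamma>D - (1 - 1 / (1 + (1/\<beta>) * 2 powr R))))
            \<longlongrightarrow> (2 powr R - 1) * (1 + 1/\<alpha>) / (1 + (1/\<beta>) * 2 powr R)) at_top"
      using tendsto_cong[OF ev2] L2 unfolding k_def dd by simp
  qed
qed

end
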